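(* Let $X,Y$ be finite nonempty sets, $A\in\{0,1\}^{X\times Y}$, $\delta,\epsilon>0$, integers $k,\ell\ge1$, and assume $\|A\|_{U(k,\ell)}\ge(1+\epsilon)\delta$. Then at least one of the following holds: (1) $|\{x\in X:\deg_A(x)\ge\delta\}|\ge\frac{\epsilon}{2}\delta^{k\ell}|X|$; (2) $k>1$ and there is $x\in X$ with $\deg_A(x)\ge\delta^k$ and $\|A_x\|_{U(k-1,\ell)}\ge(1+\epsilon)\delta$.
   Context: $\deg_A(x)=\frac{1}{|Y|}\sum_{y\in Y}A(x,y)$. $Y_x=\{y\in Y:A(x,y)=1\}$ and $A_x=A[X,Y_x]$ is the submatrix of $A$ with all rows and columns $Y_x$. The $(k,\ell)$-grid norm of $M\in\mathbb{R}_{\ge0}^{X\times Y'}$ is $\|M\|_{U(k,\ell)}=\big(\mathbb{E}_{x_1,\dots,x_k\in X,\,y_1,\dots,y_\ell\in Y'}\prod_{i\in[k],j\in[\ell]}M(x_i,y_j)\big)^{1/(k\ell)}$, expectations over independent uniform choices. *)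

theory Defs
  imports Complex_Main "HOL-Library.FuncSet"
begin

definition deg :: "'y set \<Rightarrow> ('x \<Rightarrow> 'y \<Rightarrow> real) \<Rightarrow> 'x \<Rightarrow> real" where
  "deg Y A x = (1 / real (card Y)) * (\<Sum>y\<in>Y. A x y)"

definition nbhd :: "'y set \<Rightarrow> ('x \<Rightarrow> 'y \<Rightarrow> real) \<Rightarrow> 'x \<Rightarrow> 'y set" where
  "nbhd Y A x = {y \<in> Y. A x y = 1}"

definition grid_norm :: "'x set \<Rightarrow> 'y set \<Rightarrow> ('x \<Rightarrow> 'y \<Rightarrow> real) \<Rightarrow> nat \<Rightarrow> nat \<Rightarrow> real" where
  "grid_norm X Y' M k l =
     ((\<Sum>xs\<in>{0..<k} \<rightarrow>\<^sub>E X. \<Sum>ys\<in>{0..<l} \<rightarrow>\<^sub>E Y'.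
         \<Prod>i\<in>{0..<k}. \<Prod>j\<in>{0..<l}. M (xs i) (ys j))
      / (real (card X) ^ k * real (card Y') ^ l)) powr (1 / real (k * l))"

end

theory Submission
  imports Defs
begin

definition SS :: "'x set \<Rightarrow> ('x\<Rightarrow>'y\<Rightarrow>real) \<Rightarrow> nat \<Rightarrow> nat \<Rightarrow> 'y set \<Rightarrow> real" where
"SS X A l k Y' = (\<Sum>ys\<in>{0..<l} \<rightarrow>\<^sub>E Y'. (\<Sum>x\<in>X. \<Prod>j\<in>{0..<l}. A x (ys j)) ^ k)"

lemma numer:
  assumes "finite X" "finite Y'"
  shows "(\<Sum>xs\<in>{0..<k} \<rightarrow>\<^sub>E X. \<Sum>ys\<in>{0..<l} \<rightarrow>\<^sub>E Y'.
         \<Prod>i\<in>{0..<k}. \<Prod>j\<in>{0..<l}. M (xs i) (ys j)) = SS X M l k Y'"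
proof -
  have "(\<Sum>xs\<in>{0..<k} \<rightarrow>\<^sub>E X. \<Sum>ys\<in>{0..<l} \<rightarrow>\<^sub>E Y'.
         \<Prod>i\<in>{0..<k}. \<Prod>j\<in>{0..<l}. M (xs i) (ys j))
     = (\<Sum>ys\<in>{0..<l} \<rightarrow>\<^sub>E Y'. \<Sum>xs\<in>{0..<k} \<rightarrow>\<^sub>E X.
         \<Prod>i\<in>{0..<k}. \<Prod>j\<in>{0..<l}. M (xs i) (ys j))"
    by (rule sum.swap)
  also have "\<dots> = SS X M l k Y'"
    unfolding SS_def
  proof (rule sum.cong[OF refl])
    fix ys
    have "(\<Sum>x\<in>X. \<Prod>j\<in>{0..<l}. M x (ys j)) ^ k = (\<Prod>i\<in>{0..<k}. \<Sum>x\<in>X. \<Prod>j\<in>{0..<l}. M x (ys j))"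
      by simp
    also have "\<dots> = (\<Sum>xs\<in>{0..<k} \<rightarrow>\<^sub>E X. \<Prod>i\<in>{0..<k}. \<Prod>j\<in>{0..<l}. M (xs i) (ys j))"
      by (rule prod_sum_PiE) (use assms in auto)
    finally show "(\<Sum>xs\<in>{0..<k} \<rightarrow>\<^sub>E X. \<Prod>i\<in>{0..<k}. \<Prod>j\<in>{0..<l}. M (xs i) (ys j)) = (\<Sum>x\<in>X. \<Prod>j\<in>{0..<l}. M x (ys j)) ^ k"
      by simp
  qed
  finally show ?thesis .
qed

lemma recur:
  assumes "finite X" "finite Y" "\<forall>x\<in>X. \<forall>y\<in>Y. A x y \<in> {0, 1}" "k \<ge> 1"
  shows "SS X A l k Y = (\<Sum>x\<in>X. SS X A l (k-1) (nbhd Y A x))"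
proof -
  let ?h = "\<lambda>x ys. \<Prod>j\<in>{0..<l}. A x (ys j)"
  let ?F = "\<lambda>ys. (\<Sum>x\<in>X. ?h x ys) ^ (k-1)"
  have fin: "finite ({0..<l} \<rightarrow>\<^sub>E Y)" using assms by (simp add: finite_PiE)
  have "SS X A l k Y = (\<Sum>ys\<in>{0..<l} \<rightarrow>\<^sub>E Y. \<Sum>x\<in>X. ?h x ys * ?F ys)"
    unfolding SS_def
  proof (rule sum.cong[OF refl])
    fix ys
    have "(\<Sum>x\<in>X. ?h x ys) ^ k = (\<Sum>x\<in>X. ?h x ys) * ?F ys"
      using assms(4) by (metis Suc_diff_le diff_Suc_1 power_Suc)
    then show "(\<Sum>x\<in>X. ?h x ys) ^ k = (\<Sum>x\<in>X. ?h x ys * ?F ys)"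
      by (simp add: sum_distrib_right)
  qed
  also have "\<dots> = (\<Sum>x\<in>X. \<Sum>ys\<in>{0..<l} \<rightarrow>\<^sub>E Y. ?h x ys * ?F ys)"
    by (rule sum.swap)
  also have "\<dots> = (\<Sum>x\<in>X. SS X A l (k-1) (nbhd Y A x))"
  proof (rule sum.cong[OF refl])
    fix x assume x: "x \<in> X"
    have sub: "{0..<l} \<rightarrow>\<^sub>E nbhd Y A x \<subseteq> {0..<l} \<rightarrow>\<^sub>E Y"
      by (rule PiE_mono) (auto simp: nbhd_def)
    have "(\<Sum>ys\<in>{0..<l} \<rightarrow>\<^sub>E Y. ?h x ys * ?F ys) = (\<Sum>ys\<in>{0..<l} \<rightarrow>\<^sub>E nbhd Y A x. ?h x ys * ?F ys)"
    proof (rule sum.mono_neutral_right[OF fin sub], rule ballI)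
      fix ys assume ys: "ys \<in> ({0..<l} \<rightarrow>\<^sub>E Y) - ({0..<l} \<rightarrow>\<^sub>E nbhd Y A x)"
      then obtain j where j: "j \<in> {0..<l}" "ys j \<notin> nbhd Y A x"
        by (auto simp: PiE_def Pi_def)
      with ys have "ys j \<in> Y" by (auto simp: PiE_def Pi_def)
      with j x assms(3) have "A x (ys j) = 0" by (auto simp: nbhd_def)
      with j have "?h x ys = 0" by (meson finite_atLeastLessThan prod_zero_iff)
      then show "?h x ys * ?F ys = 0" by simp
    qed
    also have "\<dots> = (\<Sum>ys\<in>{0..<l} \<rightarrow>\<^sub>E nbhd Y A x. ?F ys)"
    proof (rule sum.cong[OF refl])
      fix ys assume "ys \<in> {0..<l} \<rightarrow>\<^sub>E nbhd Y A x"
      then have "?h x ys = 1" by (auto simp: PiE_def Pi_def nbhd_def intro!: prod.neutral)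
      then show "?h x ys * ?F ys = ?F ys" by simp
    qed
    finally show "(\<Sum>ys\<in>{0..<l} \<rightarrow>\<^sub>E Y. ?h x ys * ?F ys) = SS X A l (k-1) (nbhd Y A x)"
      unfolding SS_def .
  qed
  finally show ?thesis .
qed

lemma SS_bounds:
  assumes "finite X" "finite Y'" "\<forall>x\<in>X. \<forall>y\<in>Y'. A x y \<in> {0, 1}"
  shows "0 \<le> SS X A l k Y'" "SS X A l k Y' \<le> real (card X) ^ k * real (card Y') ^ l"
proof -
  have h: "0 \<le> (\<Prod>j\<in>{0..<l}. A x (ys j)) \<and> (\<Prod>j\<in>{0..<l}. A x (ys j)) \<le> 1"
    if "x \<in> X" "ys \<in> {0..<l} \<rightarrow>\<^sub>E Y'" for x ys
  proof -
    have "\<forall>j\<in>{0..<l}. 0 \<le> A x (ys j) \<and> A x (ys j) \<le> 1"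
      using that assms(3) by (fastforce simp: PiE_def Pi_def)
    then show ?thesis by (auto intro!: prod_nonneg prod_le_1)
  qed
  have s: "0 \<le> (\<Sum>x\<in>X. \<Prod>j\<in>{0..<l}. A x (ys j)) \<and> (\<Sum>x\<in>X. \<Prod>j\<in>{0..<l}. A x (ys j)) \<le> real (card X)"
    if "ys \<in> {0..<l} \<rightarrow>\<^sub>E Y'" for ys
  proof
    show "0 \<le> (\<Sum>x\<in>X. \<Prod>j\<in>{0..<l}. A x (ys j))" using h that by (simp add: sum_nonneg)
    have "(\<Sum>x\<in>X. \<Prod>j\<in>{0..<l}. A x (ys j)) \<le> (\<Sum>x\<in>X. 1)" using h that by (intro sum_mono) auto
    then show "(\<Sum>x\<in>X. \<Prod>j\<in>{0..<l}. A x (ys j)) \<le> real (card X)" by simp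
  qed
  show "0 \<le> SS X A l k Y'" unfolding SS_def using s by (simp add: sum_nonneg)
  have "SS X A l k Y' \<le> (\<Sum>ys\<in>{0..<l} \<rightarrow>\<^sub>E Y'. real (card X) ^ k)"
    unfolding SS_def using s by (intro sum_mono power_mono) auto
  also have "\<dots> = real (card X) ^ k * real (card Y') ^ l"
    using assms by (simp add: card_PiE)
  finally show "SS X A l k Y' \<le> real (card X) ^ k * real (card Y') ^ l" .
qed

lemma powr_pow_inv:
  assumes "(b::real) \<ge> 0" "n > 0"
  shows "(b powr (1 / real n)) ^ n = b"
proof (cases "b = 0")
  case True then show ?thesis using assms by simp
next
  case False
  then have "b > 0" using assms by simp
  then have "(b powr (1 / real n)) ^ n = (b powr (1 / real n)) powr real n"
    by (simp add: powr_realpow)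
  also have "\<dots> = b" using assms by (simp add: powr_powr)
  finally show ?thesis .
qed

lemma div01: "0 \<le> (a::real) \<Longrightarrow> a \<le> d \<Longrightarrow> 0 \<le> a / d \<and> a / d \<le> 1"
  by (cases "d = 0") (auto simp: divide_le_eq_1)

lemma card_nbhd:
  assumes "finite Y" "\<forall>y\<in>Y. A x y \<in> {0, 1}"
  shows "(\<Sum>y\<in>Y. A x y) = real (card (nbhd Y A x))"
proof -
  have "(\<Sum>y\<in>Y. A x y) = (\<Sum>y\<in>Y. if A x y = 1 then 1 else 0)"
    using assms by (intro sum.cong) auto
  also have "\<dots> = (\<Sum>y\<in>{y\<in>Y. A x y = 1}. 1)"
    by (rule sum.inter_filter[OF assms(1), symmetric])
  finally show ?thesis by (simp add: nbhd_def)
qed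

theorem lemma4p2:
  fixes X :: "'x set" and Y :: "'y set" and A :: "'x \<Rightarrow> 'y \<Rightarrow> real"
    and \<delta> \<epsilon> :: real and k l :: nat
  assumes "finite X" "X \<noteq> {}" "finite Y" "Y \<noteq> {}"
    and "\<forall>x\<in>X. \<forall>y\<in>Y. A x y \<in> {0, 1}"
    and "\<delta> > 0" "\<epsilon> > 0" "k \<ge> 1" "l \<ge> 1"
    and "grid_norm X Y A k l \<ge> (1 + \<epsilon>) * \<delta>"
  shows "real (card {x\<in>X. deg Y A x \<ge> \<delta>}) \<ge> \<epsilon> / 2 * \<delta> ^ (k * l) * real (card X)
      \<or> (k > 1 \<and> (\<exists>x\<in>X. deg Y A x \<ge> \<delta> ^ k \<and>
              grid_norm X (nbhd Y A x) A (k - 1) l \<ge> (1 + \<epsilon>) * \<delta>))"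
proof (rule disjCI)
  assume not2: "\<not> (k > 1 \<and> (\<exists>x\<in>X. deg Y A x \<ge> \<delta> ^ k \<and>
              grid_norm X (nbhd Y A x) A (k - 1) l \<ge> (1 + \<epsilon>) * \<delta>))"
  define n where "n = real (card X)"
  define m where "m = real (card Y)"
  define c where "c = (1 + \<epsilon>) * \<delta>"
  define b where "b = (\<lambda>x. SS X A l (k-1) (nbhd Y A x) / (n ^ (k-1) * real (card (nbhd Y A x)) ^ l))"
  define bk where "bk = SS X A l k Y / (n ^ k * m ^ l)"
  define D where "D = \<delta> ^ l * c ^ ((k-1) * l)"
  define G where "G = {x\<in>X. deg Y A x \<ge> \<delta>}"
  have npos: "n > 0" using assms(1,2) by (simp add: n_def card_gt_0_iff)
  have mpos: "m > 0" using assms(3,4) by (simp add: m_def card_gt_0_iff)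
  have cpos: "c > 0" using assms(6,7) by (simp add: c_def)
  have sub: "nbhd Y A x \<subseteq> Y" for x by (auto simp: nbhd_def)
  have finN: "finite (nbhd Y A x)" for x using sub assms(3) finite_subset by blast
  have A01: "\<forall>x\<in>X. \<forall>y\<in>nbhd Y A x'. A x y \<in> {0, 1}" for x' using assms(5) sub by blast
  have degx: "deg Y A x = real (card (nbhd Y A x)) / m" if "x \<in> X" for x
    using card_nbhd[OF assms(3), of A x] assms(5) that by (simp add: deg_def m_def)
  have deg01: "0 \<le> deg Y A x \<and> deg Y A x \<le> 1" if "x \<in> X" for x
  proof -
    have "real (card (nbhd Y A x)) \<le> m" unfolding m_def using card_mono[OF assms(3) sub] by simp
    then show ?thesis using degx[OF that] mpos by simp
  qed
  have b01: "0 \<le> b x \<and> b x \<le> 1" for x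
  proof -
    have "0 \<le> SS X A l (k-1) (nbhd Y A x)" "SS X A l (k-1) (nbhd Y A x) \<le> n ^ (k-1) * real (card (nbhd Y A x)) ^ l"
      using SS_bounds[OF assms(1) finN A01] by (auto simp: n_def)
    then show ?thesis unfolding b_def by (rule div01)
  qed
  have F1: "SS X A l (k-1) (nbhd Y A x) = n ^ (k-1) * real (card (nbhd Y A x)) ^ l * b x" for x
  proof (cases "card (nbhd Y A x) = 0")
    case True
    then have "nbhd Y A x = {}" using finN by simp
    then have "{0..<l} \<rightarrow>\<^sub>E nbhd Y A x = {}" using assms(9) by (auto simp: PiE_eq_empty_iff intro: exI[of _ 0])
    then show ?thesis using True by (simp add: SS_def b_def)
  next
    case False
    then show ?thesis using npos by (simp add: b_def)
  qed
  have gk: "grid_norm X Y A k l = bk powr (1 / real (k * l))"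
    unfolding grid_norm_def bk_def n_def m_def using numer[OF assms(1,3)] by simp
  have bk0: "bk \<ge> 0" unfolding bk_def using SS_bounds(1)[OF assms(1,3,5)] npos mpos by simp
  have kl: "k * l > 0" using assms(8,9) by simp
  have F2: "bk \<ge> c ^ (k*l)"
  proof -
    have "c ^ (k*l) \<le> (bk powr (1 / real (k * l))) ^ (k*l)"
      using assms(10) gk cpos by (intro power_mono) (auto simp: c_def)
    then show ?thesis using powr_pow_inv[OF bk0 kl] by simp
  qed
  have F3: "bk = (\<Sum>x\<in>X. deg Y A x ^ l * b x) / n"
  proof -
    have "bk = (\<Sum>x\<in>X. n ^ (k-1) * real (card (nbhd Y A x)) ^ l * b x) / (n ^ k * m ^ l)"
      unfolding bk_def recur[OF assms(1,3,5,8)] F1 ..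
    also have "\<dots> = (\<Sum>x\<in>X. n ^ (k-1) * real (card (nbhd Y A x)) ^ l * b x / (n ^ k * m ^ l))"
      by (simp add: sum_divide_distrib)
    also have "\<dots> = (\<Sum>x\<in>X. deg Y A x ^ l * b x / n)"
    proof (rule sum.cong[OF refl])
      fix x assume x: "x \<in> X"
      have nk: "n ^ k = n * n ^ (k-1)" using assms(8) by (metis Suc_diff_le diff_Suc_1 power_Suc)
      show "n ^ (k-1) * real (card (nbhd Y A x)) ^ l * b x / (n ^ k * m ^ l) = deg Y A x ^ l * b x / n"
        unfolding degx[OF x] nk using npos mpos by (simp add: field_simps power_divide)
    qed
    also have "\<dots> = (\<Sum>x\<in>X. deg Y A x ^ l * b x) / n"
      by (simp add: sum_divide_distrib)
    finally show ?thesis .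
  qed
  have qb: "deg Y A x ^ l * b x \<le> (if x \<in> G then 1 else 0) + D" if x: "x \<in> X" for x
  proof -
    have d01: "0 \<le> deg Y A x" "deg Y A x \<le> 1" using deg01[OF x] by auto
    have D0: "D \<ge> 0" unfolding D_def using assms(6) cpos by simp
    have e1: "1 \<le> (1 + \<epsilon>) ^ ((k-1) * l)" using assms(7) by (simp add: one_le_power)
    show ?thesis
    proof (cases "x \<in> G")
      case True
      have "deg Y A x ^ l * b x \<le> 1 * 1"
        using b01[of x] d01 by (intro mult_mono) (auto simp: power_le_one)
      then show ?thesis using True D0 by simp
    next
      case False
      then have dl: "deg Y A x < \<delta>" using x by (simp add: G_def)
      have dll: "deg Y A x ^ l \<le> \<delta> ^ l" using d01 dl by (intro power_mono) auto
      have "deg Y A x ^ l * b x \<le> D"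
      proof (cases "k > 1")
        case False
        then have "k = 1" using assms(8) by simp
        then have "D = \<delta> ^ l" by (simp add: D_def)
        moreover have "deg Y A x ^ l * b x \<le> \<delta> ^ l * 1"
          using dll b01[of x] d01 assms(6) by (intro mult_mono) auto
        ultimately show ?thesis by simp
      next
        case True
        with not2 x have alt: "deg Y A x < \<delta> ^ k \<or> grid_norm X (nbhd Y A x) A (k - 1) l < c"
          by (auto simp: c_def)
        then show ?thesis
        proof
          assume "deg Y A x < \<delta> ^ k"
          then have "deg Y A x ^ l \<le> (\<delta> ^ k) ^ l" using d01 by (intro power_mono) auto
          then have "deg Y A x ^ l * b x \<le> (\<delta> ^ k) ^ l * 1"
            using b01[of x] assms(6) d01 by (intro mult_mono) auto
          also have "\<dots> = \<delta> ^ l * \<delta> ^ ((k-1) * l)"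
            using assms(8) by (metis Suc_diff_le diff_Suc_1 mult_Suc power_add power_mult mult.commute power_Suc mult_1 mult.right_neutral)
          also have "\<dots> \<le> \<delta> ^ l * c ^ ((k-1) * l)"
            using assms(6,7) by (intro mult_left_mono power_mono) (auto simp: c_def)
          finally show ?thesis by (simp add: D_def)
        next
          assume g: "grid_norm X (nbhd Y A x) A (k - 1) l < c"
          have kl1: "(k-1) * l > 0" using True assms(9) by simp
          have "grid_norm X (nbhd Y A x) A (k - 1) l = b x powr (1 / real ((k-1) * l))"
            unfolding grid_norm_def b_def n_def using numer[OF assms(1) finN] by simp
          with g have "b x powr (1 / real ((k-1) * l)) < c" by simp
          then have "(b x powr (1 / real ((k-1) * l))) ^ ((k-1)*l) \<le> c ^ ((k-1)*l)"
            by (intro power_mono) auto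
          then have bx: "b x \<le> c ^ ((k-1)*l)" using powr_pow_inv[of "b x", OF _ kl1] b01[of x] by simp
          have "deg Y A x ^ l * b x \<le> \<delta> ^ l * c ^ ((k-1)*l)"
            using dll bx b01[of x] d01 assms(6) by (intro mult_mono) auto
          then show ?thesis by (simp add: D_def)
        qed
      qed
      then show ?thesis using False by simp
    qed
  qed
  have sumq: "(\<Sum>x\<in>X. deg Y A x ^ l * b x) \<le> real (card G) + n * D"
  proof -
    have "(\<Sum>x\<in>X. deg Y A x ^ l * b x) \<le> (\<Sum>x\<in>X. (if x \<in> G then 1 else 0) + D)"
      using qb by (intro sum_mono) auto
    also have "\<dots> = (\<Sum>x\<in>X. if x \<in> G then 1 else 0) + n * D"
      by (simp add: sum.distrib n_def)
    also have "(\<Sum>x\<in>X. if x \<in> G then (1::real) else 0) = real (card G)"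
    proof -
      have "(\<Sum>x\<in>X. if x \<in> G then (1::real) else 0) = (\<Sum>x\<in>{x\<in>X. x \<in> G}. 1)"
        by (rule sum.inter_filter[OF assms(1), symmetric])
      also have "{x\<in>X. x \<in> G} = G" by (auto simp: G_def)
      finally show ?thesis by simp
    qed
    finally show ?thesis .
  qed
  have key: "c ^ (k*l) - D \<ge> \<epsilon> * \<delta> ^ (k*l)"
  proof -
    define a where "a = (1 + \<epsilon>) ^ ((k-1) * l)"
    have a1: "a \<ge> 1" unfolding a_def using assms(7) by (simp add: one_le_power)
    have kle: "k * l = l + (k-1) * l" using assms(8) by (simp add: diff_mult_distrib)
    have ck: "c ^ (k*l) = \<delta> ^ (k*l) * (a * (1 + \<epsilon>) ^ l)"
      unfolding c_def a_def by (simp add: power_mult_distrib kle power_add)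
    have Dv: "D = \<delta> ^ (k*l) * a"
      unfolding D_def c_def a_def by (simp add: power_mult_distrib kle power_add)
    have "(1 + \<epsilon>) ^ 1 \<le> (1 + \<epsilon>) ^ l" using assms(7,9) by (intro power_increasing) auto
    then have "a * (1 + \<epsilon>) ^ 1 \<le> a * (1 + \<epsilon>) ^ l" using a1 by (intro mult_left_mono) auto
    then have "a * (1 + \<epsilon>) ^ l - a \<ge> a * \<epsilon>" by (simp add: algebra_simps)
    moreover have "a * \<epsilon> \<ge> \<epsilon>" using a1 assms(7) by simp
    ultimately have "a * (1 + \<epsilon>) ^ l - a \<ge> \<epsilon>" by linarith
    then have "\<delta> ^ (k*l) * (a * (1 + \<epsilon>) ^ l - a) \<ge> \<delta> ^ (k*l) * \<epsilon>"
      using assms(6) by (intro mult_left_mono) auto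
    then show ?thesis unfolding ck Dv by (simp add: algebra_simps)
  qed
  have "c ^ (k*l) \<le> (real (card G) + n * D) / n"
    using F2 F3 sumq npos by (smt (verit) divide_right_mono)
  then have "c ^ (k*l) * n \<le> real (card G) + n * D" using npos by (simp add: field_simps)
  then have "(c ^ (k*l) - D) * n \<le> real (card G)" by (simp add: algebra_simps)
  moreover have "\<epsilon> * \<delta> ^ (k*l) * n \<le> (c ^ (k*l) - D) * n"
    using key npos by (intro mult_right_mono) auto
  moreover have "\<epsilon> / 2 * \<delta> ^ (k * l) * n \<le> \<epsilon> * \<delta> ^ (k*l) * n"
    using assms(6,7) npos by (intro mult_right_mono) auto
  ultimately show "real (card {x\<in>X. deg Y A x \<ge> \<delta>}) \<ge> \<epsilon> / 2 * \<delta> ^ (k * l) * real (card X)"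
    unfolding G_def n_def by linarith
qed

end
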